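(* Fix $p\in(0,1)$. Under the Alternating Path Randomized Design, let $\mathcal{P}_i=(v_{i,1},\dots,v_{i,k(i)+1})$ be a path component (not a cycle), write $k=k(i)$ and $y_j=Y_{v_{i,j},v_{i,j+1}}$. Then $\mathrm{Var}(\hat\Gamma_i)\le\tilde\sigma_i^2$, where \[\tilde\sigma_i^2:=\Big(\frac1p+1\Big)\sum_{j=1}^{k}y_j^2+\sum_{j=2}^{k-1}y_j^2+2\sum_{\substack{1\le j\le k-2\\ j+2\le q\le k}}p^{q-j-1}y_jy_q.\] Moreover, with $\mathbb{P}(W_{i,j}=1)=p/(p+1)$ and $\mathbb{P}(W_{i,j}=1,W_{i,q}=1)=(p^2-(-p)^{q-j+1})/(p+1)^2$, the statistic \[\hat\sigma_i^2:=\Big(\frac1p+1\Big)\sum_{j=1}^{k}\frac{W_{i,j}y_j^2}{\mathbb{P}(W_{i,j}=1)}+\sum_{j=2}^{k-1}\frac{W_{i,j}y_j^2}{\mathbb{P}(W_{i,j}=1)}+2\sum_{\substack{1\le j\le k-2\\ j+2\le q\le k}}p^{q-j-1}\frac{y_jy_q\,W_{i,j}W_{i,q}}{\mathbb{P}(W_{i,j}=1,W_{i,q}=1)}\] satisfies $\mathbb{E}[\hat\sigma_i^2]=\tilde\sigma_i^2$.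
   Context: Setting: $2N$ agents; $\mathbb{M}^t,\mathbb{M}^c$ are one-to-one matchings (sets of unordered pairs of distinct agents, each agent in at most one pair); each pair $(a,b)$ has a fixed real potential outcome $Y_{a,b}$. The disagreement set $\triangle\mathbb{M}^{(t,c)}=(\mathbb{M}^t\cup\mathbb{M}^c)\setminus(\mathbb{M}^t\cap\mathbb{M}^c)$, viewed as a graph, has connected components, each an alternating path or cycle: a sequence $(v_{i,1},\dots,v_{i,k(i)+1})$ whose consecutive pairs $e_{i,j}=(v_{i,j},v_{i,j+1})$ are its edges, alternating between $\triangle\mathbb{M}^{(t,c)}_t=\triangle\mathbb{M}^{(t,c)}\cap\mathbb{M}^t$ and $\triangle\mathbb{M}^{(t,c)}_c=\triangle\mathbb{M}^{(t,c)}\cap\mathbb{M}^c$; a path if $v_{i,1}\ne v_{i,k(i)+1}$. Alternating Path Randomized Design with parameter $p$ on a path component: $\mathbb{P}(W_{i,1}=1)=p/(1+p)$ and for $2\le j\le k(i)$, conditionally on $W_{i,1},\dots,W_{i,j-1}$, $W_{i,j}=1$ with probability $p$ if $W_{i,j-1}=0$ and $W_{i,j}=0$ if $W_{i,j-1}=1$ (components are randomized independently). Path-level estimator $\hat\Gamma_i=\sum_{j:\,e_{i,j}\in\triangle\mathbb{M}^{(t,c)}_t}\frac{W_{i,j}Y_{e_{i,j}}}{\mathbb{P}(W_{i,j}=1)}-\sum_{j:\,e_{i,j}\in\triangle\mathbb{M}^{(t,c)}_c}\frac{W_{i,j}Y_{e_{i,j}}}{\mathbb{P}(W_{i,j}=1)}$.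 Note $\hat\sigma_i^2$ only involves outcomes of realized edges ($W=1$). *)

theory Defs
  imports "HOL-Probability.Probability"
begin

text \<open>Alternating Path Randomized Design on a path with k edges.
  A realisation is a list w of k booleans; W_j (1-based, j = 1..k) is w ! (j - 1).\<close>

fun apd_chain :: "real \<Rightarrow> nat \<Rightarrow> bool \<Rightarrow> bool list pmf" where
  "apd_chain p 0 prev = return_pmf []"
| "apd_chain p (Suc n) prev =
     do { b \<leftarrow> (if prev then return_pmf False else bernoulli_pmf p);
          bs \<leftarrow> apd_chain p n b;
          return_pmf (b # bs) }"

definition apd_path :: "real \<Rightarrow> nat \<Rightarrow> bool list pmf" where
  "apd_path p k =
     (if k = 0 then return_pmf []
      else do { b \<leftarrow> bernoulli_pmf (p / (1 + p));
                bs \<leftarrow> apd_chain p (k - 1) b;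
                return_pmf (b # bs) })"

definition Wi :: "bool list \<Rightarrow> nat \<Rightarrow> real" where
  "Wi w j = (if w ! (j - 1) then 1 else 0)"

definition pr1 :: "real \<Rightarrow> nat \<Rightarrow> nat \<Rightarrow> real" where
  "pr1 p k j = measure_pmf.prob (apd_path p k) {w. w ! (j - 1)}"

definition pr2 :: "real \<Rightarrow> nat \<Rightarrow> nat \<Rightarrow> nat \<Rightarrow> real" where
  "pr2 p k j q = measure_pmf.prob (apd_path p k) {w. w ! (j - 1) \<and> w ! (q - 1)}"

text \<open>Path-level estimator: inT j says edge e_j lies in the treatment matching
  (otherwise in the control matching); y j is the outcome of edge e_j.\<close>
definition Gamma_hat :: "real \<Rightarrow> nat \<Rightarrow> (nat \<Rightarrow> bool) \<Rightarrow> (nat \<Rightarrow> real) \<Rightarrow> bool list \<Rightarrow> real" where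
  "Gamma_hat p k inT y w =
     (\<Sum>j\<in>{j\<in>{1..k}. inT j}. Wi w j * y j / pr1 p k j)
   - (\<Sum>j\<in>{j\<in>{1..k}. \<not> inT j}. Wi w j * y j / pr1 p k j)"

definition sigma_tilde :: "real \<Rightarrow> nat \<Rightarrow> (nat \<Rightarrow> real) \<Rightarrow> real" where
  "sigma_tilde p k y =
     (1 / p + 1) * (\<Sum>j=1..k. (y j)\<^sup>2) + (\<Sum>j=2..k-1. (y j)\<^sup>2)
   + 2 * (\<Sum>j=1..k-2. \<Sum>q=j+2..k. p ^ (q - j - 1) * y j * y q)"

definition sigma_hat :: "real \<Rightarrow> nat \<Rightarrow> (nat \<Rightarrow> real) \<Rightarrow> bool list \<Rightarrow> real" where
  "sigma_hat p k y w =
     (1 / p + 1) * (\<Sum>j=1..k. Wi w j * (y j)\<^sup>2 / pr1 p k j)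
   + (\<Sum>j=2..k-1. Wi w j * (y j)\<^sup>2 / pr1 p k j)
   + 2 * (\<Sum>j=1..k-2. \<Sum>q=j+2..k.
            p ^ (q - j - 1) * (y j * y q * Wi w j * Wi w q) / pr2 p k j q)"

end

theory Submission
  imports Defs
begin


lemma measure_bind_bern:
  fixes r :: real
  assumes "0 \<le> r" "r \<le> 1"
  shows "measure_pmf.prob (bind_pmf (bernoulli_pmf r) F) A
       = measure_pmf.prob (F True) A * r + measure_pmf.prob (F False) A * (1 - r)"
proof -
  have "ennreal (measure_pmf.prob (bind_pmf (bernoulli_pmf r) F) A)
     = emeasure (measure_pmf (bind_pmf (bernoulli_pmf r) F)) A"
    by (simp add: measure_pmf.emeasure_eq_measure)
  also have "\<dots> = emeasure (F True) A * ennreal r + emeasure (F False) A * ennreal (1 - r)"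
    using assms by simp
  also have "\<dots> = ennreal (measure_pmf.prob (F True) A * r + measure_pmf.prob (F False) A * (1 - r))"
    using assms by (simp add: measure_pmf.emeasure_eq_measure ennreal_mult ennreal_plus)
  finally show ?thesis
    using assms by (subst (asm) ennreal_inj) (auto intro!: add_nonneg_nonneg mult_nonneg_nonneg)
qed

lemma measure_map_Cons:
  "measure_pmf.prob (bind_pmf M (\<lambda>bs. return_pmf (b # bs))) A = measure_pmf.prob M {bs. b # bs \<in> A}"
  by (simp add: map_pmf_def[symmetric] vimage_def)

definition ff :: "real \<Rightarrow> bool \<Rightarrow> nat \<Rightarrow> real" where
  "ff p b n = (if b then (p + (-p)^n) / (1+p) else (p - p * (-p)^n) / (1+p))"

lemma ff_0: "0 \<le> p \<Longrightarrow> ff p True 0 = 1" "ff p False 0 = 0"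
  by (auto simp: ff_def field_simps)

lemma ff_1: "0 \<le> p \<Longrightarrow> ff p True (Suc 0) = 0" "0 \<le> p \<Longrightarrow> ff p False (Suc 0) = p"
proof -
  assume "0 \<le> p" then have "1 + p \<noteq> 0" by linarith
  then show "ff p True (Suc 0) = 0" "ff p False (Suc 0) = p"
    by (auto simp: ff_def field_simps)
qed

lemma ff_Suc1: "ff p True (Suc n) = ff p False n"
  by (simp add: ff_def)

lemma ff_Suc2: "ff p False (Suc n) = p * ff p True n + (1 - p) * ff p False n"
proof -
  define x where "x = (-p)^n"
  have "ff p False (Suc n) = (p + p*p*x)/(1+p)" by (simp add: ff_def x_def)
  also have "\<dots> = (p*(p+x) + (1-p)*(p-p*x))/(1+p)"
    by (rule arg_cong[where f="\<lambda>t. t/(1+p)"]) (simp add: algebra_simps)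
  also have "\<dots> = p*((p+x)/(1+p)) + (1-p)*((p-p*x)/(1+p))"
    by (simp only: times_divide_eq_right add_divide_distrib[symmetric])
  finally show ?thesis by (simp add: ff_def x_def)
qed

lemmas ff_Suc = ff_Suc1 ff_Suc2

lemma chain_joint:
  assumes p: "0 \<le> p" "p \<le> 1"
  shows "i \<le> m \<Longrightarrow> m < n \<Longrightarrow>
    measure_pmf.prob (apd_chain p n b) {w. w ! i \<and> w ! m} = ff p b (Suc i) * ff p True (m - i)"
proof (induction n arbitrary: b i m)
  case 0
  then show ?case by simp
next
  case (Suc n)
  show ?case
  proof (cases b)
    case True
    show ?thesis
    proof (cases i)
      case 0
      then show ?thesis using True p by (simp add: bind_return_pmf measure_map_Cons ff_1)
    next
      case (Suc i')
      with Suc.prems obtain m' where m: "m = Suc m'" by (cases m) auto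
      have "measure_pmf.prob (apd_chain p n False) {w. w ! i' \<and> w ! m'} = ff p False (Suc i') * ff p True (m' - i')"
        using Suc.IH[of i' m' False] Suc.prems \<open>i = Suc i'\<close> m by simp
      then show ?thesis using True p \<open>i = Suc i'\<close> m by (simp add: bind_return_pmf measure_map_Cons ff_Suc)
    qed
  next
    case False
    show ?thesis
    proof (cases i)
      case 0
      show ?thesis
      proof (cases m)
        case 0
        then show ?thesis using False p \<open>i = 0\<close> by (simp add: measure_bind_bern measure_map_Cons ff_1 ff_0)
      next
        case (Suc m')
        have "measure_pmf.prob (apd_chain p n True) {w. w ! m' \<and> w ! m'} = ff p True (Suc m') * ff p True (m' - m')"
          using Suc.IH[of m' m' True] Suc.prems \<open>m = Suc m'\<close> by simp
        then show ?thesis using False p \<open>i = 0\<close> \<open>m = Suc m'\<close> by (simp add: measure_bind_bern measure_map_Cons ff_1 ff_0)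
      qed
    next
      case (Suc i')
      with Suc.prems obtain m' where m: "m = Suc m'" by (cases m) auto
      have "\<And>c. measure_pmf.prob (apd_chain p n c) {w. w ! i' \<and> w ! m'} = ff p c (Suc i') * ff p True (m' - i')"
        using Suc.IH Suc.prems \<open>i = Suc i'\<close> m by simp
      then show ?thesis using False p \<open>i = Suc i'\<close> m by (simp add: measure_bind_bern measure_map_Cons ff_Suc algebra_simps)
    qed
  qed
qed

lemma ff_avg: "0 \<le> p \<Longrightarrow> ff p True n * (p/(1+p)) + ff p False n * (1 - p/(1+p)) = p/(1+p)"
proof -
  assume "0 \<le> p" then have "1 + p \<noteq> 0" by linarith
  define x where "x = (-p)^n"
  have e: "1 - p/(1+p) = 1/(1+p)" using \<open>1 + p \<noteq> 0\<close> by (simp add: field_simps)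
  have "ff p True n * (p/(1+p)) + ff p False n * (1 - p/(1+p))
      = ((p + x) * p + (p - p * x)) / ((1+p)*(1+p))"
    unfolding e by (simp only: ff_def x_def if_True if_False times_divide_times_eq mult_1_right add_divide_distrib[symmetric])
  also have "(p + x) * p + (p - p * x) = p * (1 + p)" by (simp add: algebra_simps)
  also have "p * (1 + p) / ((1+p)*(1+p)) = p / (1 + p)" using \<open>1 + p \<noteq> 0\<close> by simp
  finally show ?thesis .
qed

lemma apd_path_Suc: "apd_path p (Suc n) = bind_pmf (bernoulli_pmf (p / (1 + p)))
   (\<lambda>b. bind_pmf (apd_chain p n b) (\<lambda>bs. return_pmf (b # bs)))"
  by (simp add: apd_path_def)

lemma path_joint:
  assumes p: "0 \<le> p" "p \<le> 1" and im: "i \<le> m" "m < k"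
  shows "measure_pmf.prob (apd_path p k) {w. w ! i \<and> w ! m} = p/(1+p) * ff p True (m - i)"
proof -
  obtain n where k: "k = Suc n" using im by (cases k) auto
  have r: "0 \<le> p/(1+p)" "p/(1+p) \<le> 1" using p by auto
  show ?thesis
  proof (cases i)
    case 0
    show ?thesis
    proof (cases m)
      case 0
      then show ?thesis using \<open>i = 0\<close> k r p by (simp add: apd_path_Suc measure_bind_bern measure_map_Cons ff_0)
    next
      case (Suc m')
      have "measure_pmf.prob (apd_chain p n True) {w. w ! m' \<and> w ! m'} = ff p True (Suc m') * ff p True (m' - m')"
        using chain_joint[OF p, of m' m' n True] im k \<open>m = Suc m'\<close> by simp
      then show ?thesis using \<open>i = 0\<close> \<open>m = Suc m'\<close> k r p
        by (simp add: apd_path_Suc measure_bind_bern measure_map_Cons ff_0)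
    qed
  next
    case (Suc i')
    with im obtain m' where m: "m = Suc m'" by (cases m) auto
    have "\<And>c. measure_pmf.prob (apd_chain p n c) {w. w ! i' \<and> w ! m'} = ff p c (Suc i') * ff p True (m' - i')"
      using chain_joint[OF p] im k \<open>i = Suc i'\<close> m by simp
    then have "measure_pmf.prob (apd_path p k) {w. w ! i \<and> w ! m}
       = ff p True (Suc i') * ff p True (m' - i') * (p/(1+p)) + ff p False (Suc i') * ff p True (m' - i') * (1 - p/(1+p))"
      using \<open>i = Suc i'\<close> m k r by (simp add: apd_path_Suc measure_bind_bern measure_map_Cons)
    also have "\<dots> = (ff p True (Suc i') * (p/(1+p)) + ff p False (Suc i') * (1 - p/(1+p))) * ff p True (m' - i')"
      by (simp add: algebra_simps)
    also have "\<dots> = p/(1+p) * ff p True (m - i)" using ff_avg[OF p(1)] \<open>i = Suc i'\<close> m by simp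
    finally show ?thesis .
  qed
qed

lemma set_chain: "w \<in> set_pmf (apd_chain p n b) \<Longrightarrow> length w = n"
  by (induction n arbitrary: b w) (auto simp: set_bind_pmf split: if_splits)

lemma finite_path: "finite (set_pmf (apd_path p k))"
proof -
  have "set_pmf (apd_path p k) \<subseteq> {w. length w = k}"
    using set_chain[of _ p "k - 1"] by (cases k) (auto simp: apd_path_def set_bind_pmf)
  moreover have "finite {w::bool list. length w = k}"
    using finite_lists_length_eq[of "UNIV::bool set" k] by simp
  ultimately show ?thesis by (rule finite_subset)
qed



definition dd :: "nat \<Rightarrow> nat \<Rightarrow> nat" where
  "dd j q = (if j \<le> q then q - j else j - q)"

definition VV :: "real \<Rightarrow> nat \<Rightarrow> (nat \<Rightarrow> real) \<Rightarrow> real" where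
  "VV p k y = (\<Sum>j=1..k. \<Sum>q=1..k. y j * y q * p ^ dd j q)"

lemma VV_Suc: "VV p (Suc k) y = VV p k y + 2 * y (Suc k) * (\<Sum>j=1..k. y j * p ^ (Suc k - j)) + (y (Suc k))\<^sup>2"
proof -
  have "VV p (Suc k) y = (\<Sum>j=1..k. (\<Sum>q=1..k. y j * y q * p ^ dd j q) + y j * y (Suc k) * p ^ dd j (Suc k))
      + ((\<Sum>q=1..k. y (Suc k) * y q * p ^ dd (Suc k) q) + y (Suc k) * y (Suc k) * p ^ dd (Suc k) (Suc k))"
    unfolding VV_def by (simp add: sum.cl_ivl_Suc)
  also have "\<dots> = VV p k y + (\<Sum>j=1..k. y j * y (Suc k) * p ^ (Suc k - j))
      + (\<Sum>q=1..k. y (Suc k) * y q * p ^ (Suc k - q)) + (y (Suc k))\<^sup>2"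
  proof -
    have e1: "(\<Sum>j=1..k. y j * y (Suc k) * p ^ dd j (Suc k)) = (\<Sum>j=1..k. y j * y (Suc k) * p ^ (Suc k - j))"
      by (rule sum.cong) (auto simp: dd_def)
    have e2: "(\<Sum>j=1..k. y (Suc k) * y j * p ^ dd (Suc k) j) = (\<Sum>j=1..k. y (Suc k) * y j * p ^ (Suc k - j))"
      by (rule sum.cong) (auto simp: dd_def)
    show ?thesis unfolding VV_def sum.distrib e1 e2 by (simp add: dd_def power2_eq_square)
  qed
  also have "\<dots> = VV p k y + 2 * y (Suc k) * (\<Sum>j=1..k. y j * p ^ (Suc k - j)) + (y (Suc k))\<^sup>2"
    by (simp add: sum_distrib_left algebra_simps)
  finally show ?thesis .
qed

definition SS :: "real \<Rightarrow> nat \<Rightarrow> (nat \<Rightarrow> real) \<Rightarrow> real" where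
  "SS p k y = (\<Sum>j=1..k-2. \<Sum>q=j+2..k. p ^ (q - j - 1) * y j * y q)"

lemma SS_Suc: "SS p (Suc (Suc (Suc m))) y = SS p (Suc (Suc m)) y
   + (\<Sum>j=1..Suc m. p ^ (Suc (Suc m) - j) * y j * y (Suc (Suc (Suc m))))"
proof -
  have "SS p (Suc (Suc (Suc m))) y = (\<Sum>j=1..Suc m. \<Sum>q=j+2..Suc (Suc (Suc m)). p ^ (q - j - 1) * y j * y q)"
    by (simp add: SS_def)
  also have "\<dots> = (\<Sum>j=1..Suc m. (\<Sum>q=j+2..Suc (Suc m). p ^ (q - j - 1) * y j * y q)
       + p ^ (Suc (Suc m) - j) * y j * y (Suc (Suc (Suc m))))"
    by (rule sum.cong) (auto simp: sum.cl_ivl_Suc)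
  also have "\<dots> = (\<Sum>j=1..Suc m. (\<Sum>q=j+2..Suc (Suc m). p ^ (q - j - 1) * y j * y q))
       + (\<Sum>j=1..Suc m. p ^ (Suc (Suc m) - j) * y j * y (Suc (Suc (Suc m))))"
    by (simp add: sum.distrib)
  also have "(\<Sum>j=1..Suc m. (\<Sum>q=j+2..Suc (Suc m). p ^ (q - j - 1) * y j * y q)) = SS p (Suc (Suc m)) y"
    by (simp add: SS_def sum.cl_ivl_Suc)
  finally show ?thesis .
qed

lemma sigma_tilde_SS: "sigma_tilde p k y = (1 / p + 1) * (\<Sum>j=1..k. (y j)\<^sup>2) + (\<Sum>j=2..k-1. (y j)\<^sup>2) + 2 * SS p k y"
  by (simp add: sigma_tilde_def SS_def)

lemma step_alg:
  fixes p A0 B0 S0 V0 Y2 Y3 s1 s2 :: real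
  assumes "p \<noteq> 0" "p * s1 = Y3 * s2"
  shows "p * ((1 / p + 1) * (A0 + Y3\<^sup>2) + (B0 + Y2\<^sup>2) + 2 * (S0 + s1))
         - (V0 + 2 * Y3 * (s2 + Y2 * p) + Y3\<^sup>2)
       = (p * ((1 / p + 1) * A0 + B0 + 2 * S0) - V0) + p * (Y2 - Y3)\<^sup>2"
proof -
  have "p * ((1 / p + 1) * (A0 + Y3\<^sup>2)) = (A0 + Y3\<^sup>2) + p * (A0 + Y3\<^sup>2)"
    using assms(1) by (simp add: field_simps)
  moreover have "p * ((1 / p + 1) * A0) = A0 + p * A0"
    using assms(1) by (simp add: field_simps)
  ultimately show ?thesis using assms(2) by (simp add: algebra_simps power2_eq_square)
qed

lemma main_ineq_aux:
  assumes p: "0 < p"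
  shows "VV p (Suc (Suc m)) y \<le> p * sigma_tilde p (Suc (Suc m)) y"
proof (induction m)
  case 0
  have v2: "VV p 2 y = y 1 * y 1 + y 2 * y 2 + 2 * p * y 1 * y 2"
    by (simp add: VV_def dd_def numeral_2_eq_2 sum.cl_ivl_Suc algebra_simps)
  have t2: "sigma_tilde p 2 y = (1 / p + 1) * (y 1 * y 1 + y 2 * y 2)"
    by (simp add: sigma_tilde_def numeral_2_eq_2 sum.cl_ivl_Suc power2_eq_square)
  have pp: "p * (1 / p + 1) = 1 + p" using p by (simp add: field_simps)
  have "p * sigma_tilde p 2 y - VV p 2 y = p * (y 1 - y 2)\<^sup>2"
    unfolding v2 t2 mult.assoc[symmetric] pp by (simp add: algebra_simps power2_eq_square)
  moreover have "0 \<le> p * (y 1 - y 2)\<^sup>2" using p by simp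
  ultimately show ?case by (simp add: numeral_2_eq_2)
next
  case (Suc m)
  let ?k = "Suc (Suc m)"
  have A: "(\<Sum>j=1..Suc ?k. (y j)\<^sup>2) = (\<Sum>j=1..?k. (y j)\<^sup>2) + (y (Suc ?k))\<^sup>2"
    using sum.cl_ivl_Suc[of "\<lambda>j. (y j)\<^sup>2" 1 ?k] by simp
  have B: "(\<Sum>j=2..Suc ?k - 1. (y j)\<^sup>2) = (\<Sum>j=2..?k - 1. (y j)\<^sup>2) + (y ?k)\<^sup>2"
    using sum.cl_ivl_Suc[of "\<lambda>j. (y j)\<^sup>2" 2 "Suc m"] by simp
  have C: "(\<Sum>j=1..?k. y j * p ^ (Suc ?k - j)) = (\<Sum>j=1..Suc m. y j * p ^ (Suc ?k - j)) + y ?k * p"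
    using sum.cl_ivl_Suc[of "\<lambda>j. y j * p ^ (Suc ?k - j)" 1 "Suc m"] by simp
  have D: "p * (\<Sum>j=1..Suc m. p ^ (?k - j) * y j * y (Suc ?k)) = y (Suc ?k) * (\<Sum>j=1..Suc m. y j * p ^ (Suc ?k - j))"
    unfolding sum_distrib_left
    by (rule sum.cong) (auto simp: Suc_diff_le algebra_simps)
  have T1: "sigma_tilde p (Suc ?k) y = (1 / p + 1) * ((\<Sum>j=1..?k. (y j)\<^sup>2) + (y (Suc ?k))\<^sup>2)
      + ((\<Sum>j=2..?k - 1. (y j)\<^sup>2) + (y ?k)\<^sup>2)
      + 2 * (SS p ?k y + (\<Sum>j=1..Suc m. p ^ (?k - j) * y j * y (Suc ?k)))"
    by (simp only: sigma_tilde_SS A B SS_Suc)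
  have T0: "sigma_tilde p ?k y = (1 / p + 1) * (\<Sum>j=1..?k. (y j)\<^sup>2) + (\<Sum>j=2..?k - 1. (y j)\<^sup>2) + 2 * SS p ?k y"
    by (simp only: sigma_tilde_SS)
  have V1: "VV p (Suc ?k) y = VV p ?k y + 2 * y (Suc ?k) * ((\<Sum>j=1..Suc m. y j * p ^ (Suc ?k - j)) + y ?k * p) + (y (Suc ?k))\<^sup>2"
    by (simp only: VV_Suc[of p ?k y] C)
  have "p * sigma_tilde p (Suc ?k) y - VV p (Suc ?k) y
      = (p * sigma_tilde p ?k y - VV p ?k y) + p * (y ?k - y (Suc ?k))\<^sup>2"
    unfolding T1 T0 V1
    using p D by (intro step_alg) auto
  moreover have "0 \<le> p * (y ?k - y (Suc ?k))\<^sup>2" using p by simp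
  ultimately show ?case using Suc.IH by linarith
qed

lemma main_ineq:
  assumes p: "0 < p" and k: "1 \<le> k"
  shows "VV p k y / p \<le> sigma_tilde p k y"
proof -
  have "VV p k y \<le> p * sigma_tilde p k y"
  proof (cases "k = 1")
    case True
    then show ?thesis using p
    proof -
      have pp: "p * (1 / p + 1) = 1 + p" using p by (simp add: field_simps)
      have "VV p 1 y = y 1 * y 1" by (simp add: VV_def dd_def)
      moreover have "p * sigma_tilde p 1 y = (1 + p) * (y 1 * y 1)"
        by (simp add: sigma_tilde_def power2_eq_square mult.assoc[symmetric] pp)
      moreover have "0 \<le> p * (y 1 * y 1)" using p by simp
      ultimately show ?thesis using True by (simp add: distrib_right)
    qed
  next
    case False
    then have "2 \<le> k" using k by linarith
    define m where "m = k - 2"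
    have "k = Suc (Suc m)" using \<open>2 \<le> k\<close> by (simp add: m_def)
    then show ?thesis using main_ineq_aux[OF p] by simp
  qed
  then show ?thesis using p by (simp add: divide_le_eq mult.commute)
qed


lemma ff_pos:
  assumes "0 < p" "p < 1" "2 \<le> n"
  shows "0 < ff p True n"
proof -
  have "p ^ n \<le> p ^ 2" using assms by (intro power_decreasing) auto
  moreover have "p ^ 2 < p" using assms by (simp add: power2_eq_square)
  moreover have "- (p ^ n) \<le> (-p) ^ n"
  proof -
    have "\<bar>(-p)^n\<bar> = p ^ n" using assms by (simp add: power_abs)
    then show ?thesis using abs_ge_minus_self[of "(-p)^n"] by linarith
  qed
  ultimately have "0 < p + (-p)^n" by linarith
  then show ?thesis using assms by (simp add: ff_def)
qed

lemma aux_div: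
  fixes a b r t x :: real
  assumes "r \<noteq> 0" "t \<noteq> 0"
  shows "(a / r) * (b / r) * (r * (x / t)) = a * b * x / (r * t)"
  using assms by (simp add: field_simps)

theorem proposition7:
  fixes p :: real and k :: nat and inT :: "nat \<Rightarrow> bool" and y :: "nat \<Rightarrow> real"
  assumes "0 < p" and "p < 1"
    and "1 \<le> k"
    and "\<And>j. 1 \<le> j \<Longrightarrow> j < k \<Longrightarrow> (inT (j + 1) \<longleftrightarrow> \<not> inT j)"
  shows "measure_pmf.variance (apd_path p k) (Gamma_hat p k inT y) \<le> sigma_tilde p k y
       \<and> measure_pmf.expectation (apd_path p k) (sigma_hat p k y) = sigma_tilde p k y"
proof -
  let ?M = "apd_path p k"
  define r where "r = p / (1 + p)"
  have p0: "0 \<le> p" "p \<le> 1" using assms by auto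
  have rpos: "0 < r" using assms by (simp add: r_def)
  have int: "\<And>f::bool list \<Rightarrow> real. integrable (measure_pmf ?M) f"
    by (rule integrable_measure_pmf_finite[OF finite_path])
  have Wind: "\<And>j. (\<lambda>w. Wi w j) = indicator {w. w ! (j-1)}"
    by (auto simp: Wi_def indicator_def fun_eq_iff)
  have WWind: "\<And>j q. (\<lambda>w. Wi w j * Wi w q) = indicator {w. w ! (j-1) \<and> w ! (q-1)}"
    by (auto simp: Wi_def indicator_def fun_eq_iff)
  have EW: "\<And>j. measure_pmf.expectation ?M (\<lambda>w. Wi w j) = pr1 p k j"
    by (simp add: Wind pr1_def)
  have EWW: "\<And>j q. measure_pmf.expectation ?M (\<lambda>w. Wi w j * Wi w q) = pr2 p k j q"
    by (simp add: WWind pr2_def)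
  have pr1v: "pr1 p k j = r" if j: "j \<in> {1..k}" for j
  proof -
    have "{w. w!(j-1)} = {w::bool list. w!(j-1) \<and> w!(j-1)}" by auto
    moreover have "j - 1 < k" using j by auto
    ultimately show "pr1 p k j = r" using path_joint[OF p0, of "j-1" "j-1" k]
      by (simp add: pr1_def r_def ff_0 p0)
  qed
  have pr2v: "pr2 p k j q = r * ff p True (dd j q)" if j: "j \<in> {1..k}" and q: "q \<in> {1..k}" for j q
  proof (cases "j \<le> q")
    case True
    then show ?thesis using path_joint[OF p0, of "j-1" "q-1" k] j q by (simp add: pr2_def r_def dd_def)
  next
    case False
    have "{w. w!(j-1) \<and> w!(q-1)} = {w::bool list. w!(q-1) \<and> w!(j-1)}" by auto
    then show ?thesis using False path_joint[OF p0, of "q-1" "j-1" k] j q by (simp add: pr2_def r_def dd_def)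
  qed

  have sh: "\<And>w. sigma_hat p k y w = (1/p+1) * (\<Sum>j=1..k. ((y j)\<^sup>2 / pr1 p k j) * Wi w j)
     + (\<Sum>j=2..k-1. ((y j)\<^sup>2 / pr1 p k j) * Wi w j)
     + 2 * (\<Sum>j=1..k-2. \<Sum>q=j+2..k. (p ^ (q - j - 1) * y j * y q / pr2 p k j q) * (Wi w j * Wi w q))"
    by (simp add: sigma_hat_def mult_ac)
  have Esh: "measure_pmf.expectation ?M (sigma_hat p k y) = (1/p+1) * (\<Sum>j=1..k. ((y j)\<^sup>2 / pr1 p k j) * pr1 p k j)
     + (\<Sum>j=2..k-1. ((y j)\<^sup>2 / pr1 p k j) * pr1 p k j)
     + 2 * (\<Sum>j=1..k-2. \<Sum>q=j+2..k. (p ^ (q - j - 1) * y j * y q / pr2 p k j q) * pr2 p k j q)"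
    unfolding sh by (simp add: int integral_sum EW EWW)
  have s1: "(\<Sum>j=1..k. ((y j)\<^sup>2 / pr1 p k j) * pr1 p k j) = (\<Sum>j=1..k. (y j)\<^sup>2)"
    by (rule sum.cong) (use rpos pr1v in auto)
  have s2: "(\<Sum>j=2..k-1. ((y j)\<^sup>2 / pr1 p k j) * pr1 p k j) = (\<Sum>j=2..k-1. (y j)\<^sup>2)"
    by (rule sum.cong) (use rpos pr1v in auto)
  have s3: "(\<Sum>j=1..k-2. \<Sum>q=j+2..k. (p ^ (q - j - 1) * y j * y q / pr2 p k j q) * pr2 p k j q)
     = (\<Sum>j=1..k-2. \<Sum>q=j+2..k. p ^ (q - j - 1) * y j * y q)"
  proof (rule sum.cong[OF refl], rule sum.cong[OF refl])
    fix j q assume j: "j \<in> {1..k-2}" and q: "q \<in> {j+2..k}"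
    have "pr2 p k j q = r * ff p True (dd j q)" using j q by (intro pr2v) auto
    moreover have "0 < ff p True (dd j q)" using j q assms by (intro ff_pos) (auto simp: dd_def)
    ultimately have "pr2 p k j q \<noteq> 0" using rpos by simp
    then show "(p ^ (q - j - 1) * y j * y q / pr2 p k j q) * pr2 p k j q = p ^ (q - j - 1) * y j * y q"
      by simp
  qed
  have E: "measure_pmf.expectation ?M (sigma_hat p k y) = sigma_tilde p k y"
    unfolding Esh s1 s2 s3 sigma_tilde_def by simp

  define s where "s j = (if inT j then 1 else -1::real)" for j
  define c where "c j = s j * y j / r" for j
  have sgn: "s j = s 1 * (-1) ^ (j - 1)" if "1 \<le> j" "j \<le> k" for j
    using that
  proof (induction j)
    case 0 then show ?case by simp
  next
    case (Suc j)
    show ?case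
    proof (cases "j = 0")
      case True then show ?thesis by simp
    next
      case False
      then have "s (Suc j) = - s j" using assms(4)[of j] Suc.prems by (auto simp: s_def)
      moreover have "s j = s 1 * (-1) ^ (j - 1)" using Suc False by auto
      moreover have "(-1::real) ^ (Suc j - 1) = - ((-1) ^ (j - 1))" using False by (cases j) auto
      ultimately show ?thesis by simp
    qed
  qed
  have s11: "s 1 * s 1 = 1" by (simp add: s_def)
  have ssd: "s j * s q * (-p) ^ dd j q = p ^ dd j q" if "j \<in> {1..k}" "q \<in> {1..k}" for j q
  proof -
    have e: "j - 1 + (q - 1) = dd j q + 2 * (min j q - 1)" using that by (auto simp: dd_def)
    have "s j * s q = (s 1 * s 1) * ((-1) ^ (j - 1) * (-1) ^ (q - 1))"
      using sgn[of j] sgn[of q] that by (simp add: mult_ac)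
    also have "\<dots> = (s 1 * s 1) * (-1) ^ (j - 1 + (q - 1))" by (simp only: power_add)
    also have "\<dots> = (-1) ^ dd j q" unfolding s11 e by (simp add: power_add power_mult)
    finally have "s j * s q * (-p) ^ dd j q = (-1) ^ dd j q * (-p) ^ dd j q" by simp
    also have "\<dots> = ((-1) * (-p)) ^ dd j q" by (simp only: power_mult_distrib)
    finally show ?thesis by simp
  qed
  have G: "Gamma_hat p k inT y = (\<lambda>w. \<Sum>j=1..k. c j * Wi w j)"
  proof
    fix w
    have "Gamma_hat p k inT y w = (\<Sum>j=1..k. (if inT j then Wi w j * y j / pr1 p k j else 0))
        - (\<Sum>j=1..k. (if \<not> inT j then Wi w j * y j / pr1 p k j else 0))"
      unfolding Gamma_hat_def by (simp only: sum.inter_filter[OF finite_atLeastAtMost])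
    also have "\<dots> = (\<Sum>j=1..k. c j * Wi w j)"
      unfolding sum_subtractf[symmetric] by (rule sum.cong) (auto simp: pr1v c_def s_def)
    finally show "Gamma_hat p k inT y w = (\<Sum>j=1..k. c j * Wi w j)" .
  qed
  have Var0: "measure_pmf.variance ?M (Gamma_hat p k inT y)
      = measure_pmf.expectation ?M (\<lambda>w. (Gamma_hat p k inT y w)\<^sup>2) - (measure_pmf.expectation ?M (Gamma_hat p k inT y))\<^sup>2"
    by (rule measure_pmf.variance_eq) (rule int)+
  have EG: "measure_pmf.expectation ?M (Gamma_hat p k inT y) = (\<Sum>j=1..k. c j * r)"
    unfolding G by (simp add: int integral_sum EW pr1v)
  have G2: "\<And>w. (Gamma_hat p k inT y w)\<^sup>2 = (\<Sum>j=1..k. \<Sum>q=1..k. (c j * c q) * (Wi w j * Wi w q))"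
    unfolding G power2_eq_square sum_product by (simp add: mult_ac)
  have EG2: "measure_pmf.expectation ?M (\<lambda>w. (Gamma_hat p k inT y w)\<^sup>2) = (\<Sum>j=1..k. \<Sum>q=1..k. (c j * c q) * pr2 p k j q)"
    unfolding G2 by (simp add: int integral_sum EWW)
  have EGsq: "(\<Sum>j=1..k. c j * r)\<^sup>2 = (\<Sum>j=1..k. \<Sum>q=1..k. (c j * c q) * (r * r))"
    unfolding power2_eq_square sum_product by (simp add: mult_ac)
  have termeq: "(c j * c q) * pr2 p k j q - (c j * c q) * (r * r) = y j * y q * p ^ dd j q / p"
    if j: "j \<in> {1..k}" and q: "q \<in> {1..k}" for j q
  proof -
    define x where "x = (-p) ^ dd j q"
    have r0: "r \<noteq> 0" using rpos by simp
    have p1: "1 + p \<noteq> 0" using assms(1) by simp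
    have f: "ff p True (dd j q) - r = x / (1 + p)" unfolding ff_def r_def x_def if_True diff_divide_distrib[symmetric] by simp
    have rp: "r * (1 + p) = p" using p1 by (simp add: r_def)
    have "pr2 p k j q - r * r = r * (ff p True (dd j q) - r)"
      using pr2v[OF j q] by (simp add: algebra_simps)
    then have A: "pr2 p k j q - r * r = r * (x / (1 + p))" using f by simp
    have "(c j * c q) * pr2 p k j q - (c j * c q) * (r * r) = (c j * c q) * (r * (x / (1 + p)))"
      using A by (simp add: right_diff_distrib[symmetric])
    also have "\<dots> = (s j * y j) * (s q * y q) * x / (r * (1 + p))"
      unfolding c_def by (rule aux_div[OF r0 p1])
    also have "\<dots> = (s j * s q * x) * (y j * y q) / (r * (1 + p))"
      by (simp add: mult_ac)
    also have "\<dots> = y j * y q * p ^ dd j q / p"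
      unfolding rp using ssd[OF j q] by (simp add: x_def)
    finally show ?thesis .
  qed
  have Var: "measure_pmf.variance ?M (Gamma_hat p k inT y) = VV p k y / p"
  proof -
    have "measure_pmf.variance ?M (Gamma_hat p k inT y)
      = (\<Sum>j=1..k. \<Sum>q=1..k. (c j * c q) * pr2 p k j q) - (\<Sum>j=1..k. \<Sum>q=1..k. (c j * c q) * (r * r))"
      using Var0 EG2 EG EGsq by simp
    also have "\<dots> = (\<Sum>j=1..k. \<Sum>q=1..k. (c j * c q) * pr2 p k j q - (c j * c q) * (r * r))"
      by (simp only: sum_subtractf)
    also have "\<dots> = (\<Sum>j=1..k. \<Sum>q=1..k. y j * y q * p ^ dd j q / p)"
      by (intro sum.cong refl) (rule termeq)
    also have "\<dots> = VV p k y / p" by (simp add: VV_def sum_divide_distrib)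
    finally show ?thesis .
  qed
  show ?thesis using Var E main_ineq[OF assms(1) assms(3)] by simp
qed

end
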